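(* Let $G$ be a 2-connected subcubic graph and $e=uv\in E(G)$ such that $G-e$ is simple and 2-connected, and let $G_u$ be the graph obtained from $G-e$ by deleting $u$ and adding a new edge $f_u$ joining the two neighbours of $u$ other than $v$. Then $\widehat\delta(G,e)=\min\{\delta(G_u,f_u)+2,\ \widehat\delta(G_u,f_u)+1\}$.
   Context: Graphs may have loops and parallel edges unless called simple; a graph is subcubic if every vertex has degree at most 3. $n(G)$ is the number of vertices of $G$ and $n_2(G)$ the number of vertices of degree 2. A cycle is a connected 2-regular subgraph (a pair of parallel edges forms a cycle). An even cover of $G$ is a spanning subgraph $F$ in which every vertex has degree 0 or 2; its excess is $\mathrm{exc}(F)=2c(F)+i(F)$, where $c(F)$ is the number of cycles and $i(F)$ the number of isolated vertices of $F$. For $e\in E(G)$, let $\mathcal E(G,e)$ (resp. $\widehat{\mathcal E}(G,e)$) be the set of even covers of $G$ containing (resp. not containing) $e$, and define $\mathrm{exc}(G,e)=\min_{F\in\mathcal E(G,e)}\mathrm{exc}(F)-2$, $\widehat{\mathrm{exc}}(G,e)=\min_{F\in\widehat{\mathcal E}(G,e)}\mathrm{exc}(F)$, $\delta(G,e)=\mathrm{exc}(G,e)-\frac{n(G)+n_2(G)}4$, $\widehat\delta(G,e)=\widehat{\mathrm{exc}}(G,e)-\frac{n(G)+n_2(G)}4$. *)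

theory Defs
  imports Main "HOL-Library.Extended_Real"
begin

text \<open>A (multi)graph is a triple (V, E, ends): a vertex set V, an edge set E, and an
  incidence map ends assigning to each edge its set of endpoints (one endpoint = loop,
  two endpoints = ordinary edge). Distinct edges may have the same ends (parallel edges).\<close>

definition wf_graph :: "'v set \<Rightarrow> 'e set \<Rightarrow> ('e \<Rightarrow> 'v set) \<Rightarrow> bool" where
  "wf_graph V E ends \<longleftrightarrow> finite V \<and> finite E \<and>
     (\<forall>e\<in>E. ends e \<subseteq> V \<and> (card (ends e) = 1 \<or> card (ends e) = 2))"

text \<open>Degree of x with respect to the edge set F (loops count twice).\<close>
definition deg :: "('e \<Rightarrow> 'v set) \<Rightarrow> 'e set \<Rightarrow> 'v \<Rightarrow> nat" where
  "deg ends F x = card {e\<in>F. x \<in> ends e} + card {e\<in>F. ends e = {x}}"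

definition subcubic :: "'v set \<Rightarrow> 'e set \<Rightarrow> ('e \<Rightarrow> 'v set) \<Rightarrow> bool" where
  "subcubic V E ends \<longleftrightarrow> (\<forall>x\<in>V. deg ends E x \<le> 3)"

definition simple_graph :: "'v set \<Rightarrow> 'e set \<Rightarrow> ('e \<Rightarrow> 'v set) \<Rightarrow> bool" where
  "simple_graph V E ends \<longleftrightarrow> (\<forall>e\<in>E. card (ends e) = 2) \<and> inj_on ends E"

definition adj :: "('e \<Rightarrow> 'v set) \<Rightarrow> 'e set \<Rightarrow> 'v \<Rightarrow> 'v \<Rightarrow> bool" where
  "adj ends F a b \<longleftrightarrow> (\<exists>e\<in>F. a \<in> ends e \<and> b \<in> ends e \<and> a \<noteq> b)"

definition connected_graph :: "'v set \<Rightarrow> 'e set \<Rightarrow> ('e \<Rightarrow> 'v set) \<Rightarrow> bool" where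
  "connected_graph V E ends \<longleftrightarrow> V \<noteq> {} \<and> (\<forall>x\<in>V. \<forall>y\<in>V. (adj ends E)\<^sup>*\<^sup>* x y)"

definition two_connected :: "'v set \<Rightarrow> 'e set \<Rightarrow> ('e \<Rightarrow> 'v set) \<Rightarrow> bool" where
  "two_connected V E ends \<longleftrightarrow> 3 \<le> card V \<and> connected_graph V E ends \<and>
     (\<forall>x\<in>V. connected_graph (V - {x}) {e\<in>E. x \<notin> ends e} ends)"

definition n2 :: "'v set \<Rightarrow> 'e set \<Rightarrow> ('e \<Rightarrow> 'v set) \<Rightarrow> nat" where
  "n2 V E ends = card {x\<in>V. deg ends E x = 2}"

definition even_cover :: "'v set \<Rightarrow> 'e set \<Rightarrow> ('e \<Rightarrow> 'v set) \<Rightarrow> 'e set \<Rightarrow> bool" where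
  "even_cover V E ends F \<longleftrightarrow> F \<subseteq> E \<and> (\<forall>x\<in>V. deg ends F x = 0 \<or> deg ends F x = 2)"

text \<open>Number of cycles of F: components of (V,F) containing an edge.\<close>
definition num_cycles :: "'v set \<Rightarrow> ('e \<Rightarrow> 'v set) \<Rightarrow> 'e set \<Rightarrow> nat" where
  "num_cycles V ends F =
     card {{y\<in>V. (adj ends F)\<^sup>*\<^sup>* x y} | x. x \<in> V \<and> deg ends F x \<noteq> 0}"

definition num_isolated :: "'v set \<Rightarrow> ('e \<Rightarrow> 'v set) \<Rightarrow> 'e set \<Rightarrow> nat" where
  "num_isolated V ends F = card {x\<in>V. deg ends F x = 0}"

definition exc :: "'v set \<Rightarrow> ('e \<Rightarrow> 'v set) \<Rightarrow> 'e set \<Rightarrow> nat" where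
  "exc V ends F = 2 * num_cycles V ends F + num_isolated V ends F"

text \<open>Minima over possibly empty sets are taken in the extended reals (empty min = \<infinity>).\<close>
definition exc_in :: "'v set \<Rightarrow> 'e set \<Rightarrow> ('e \<Rightarrow> 'v set) \<Rightarrow> 'e \<Rightarrow> ereal" where
  "exc_in V E ends e =
     (INF F \<in> {F. even_cover V E ends F \<and> e \<in> F}. ereal (real (exc V ends F))) - 2"

definition exc_out :: "'v set \<Rightarrow> 'e set \<Rightarrow> ('e \<Rightarrow> 'v set) \<Rightarrow> 'e \<Rightarrow> ereal" where
  "exc_out V E ends e =
     (INF F \<in> {F. even_cover V E ends F \<and> e \<notin> F}. ereal (real (exc V ends F)))"

definition delta :: "'v set \<Rightarrow> 'e set \<Rightarrow> ('e \<Rightarrow> 'v set) \<Rightarrow> 'e \<Rightarrow> ereal" where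
  "delta V E ends e = exc_in V E ends e - ereal ((real (card V) + real (n2 V E ends)) / 4)"

definition delta_hat :: "'v set \<Rightarrow> 'e set \<Rightarrow> ('e \<Rightarrow> 'v set) \<Rightarrow> 'e \<Rightarrow> ereal" where
  "delta_hat V E ends e = exc_out V E ends e - ereal ((real (card V) + real (n2 V E ends)) / 4)"

text \<open>The graph G_u: from G - e delete u and add a new edge f (a label not in E) joining
  the neighbours of u in G - e.\<close>
definition nbrs_minus :: "'e set \<Rightarrow> ('e \<Rightarrow> 'v set) \<Rightarrow> 'e \<Rightarrow> 'v \<Rightarrow> 'v set" where
  "nbrs_minus E ends e u = {w. \<exists>e'\<in>E - {e}. u \<in> ends e' \<and> w \<in> ends e' \<and> w \<noteq> u}"

definition Gu_V :: "'v set \<Rightarrow> 'v \<Rightarrow> 'v set" where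
  "Gu_V V u = V - {u}"

definition Gu_E :: "'e set \<Rightarrow> ('e \<Rightarrow> 'v set) \<Rightarrow> 'v \<Rightarrow> 'e \<Rightarrow> 'e set" where
  "Gu_E E ends u f = {e'\<in>E. u \<notin> ends e'} \<union> {f}"

definition Gu_ends :: "'e set \<Rightarrow> ('e \<Rightarrow> 'v set) \<Rightarrow> 'e \<Rightarrow> 'v \<Rightarrow> 'e \<Rightarrow> ('e \<Rightarrow> 'v set)" where
  "Gu_ends E ends e u f = ends(f := nbrs_minus E ends e u)"

end

theory Submission
  imports Defs
begin


lemma deg_noloop:
  assumes "\<And>y. y \<in> F \<Longrightarrow> card (ends y) = 2"
  shows "deg ends F x = card {y\<in>F. x \<in> ends y}"
proof -
  have h: "{y\<in>F. ends y = {x}} = {}" using assms by fastforce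
  show ?thesis unfolding deg_def h by simp
qed

lemma deg_cong: "(\<And>y. y \<in> F \<Longrightarrow> ends y = ends2 y) \<Longrightarrow> deg ends F x = deg ends2 F x"
  unfolding deg_def
  by (metis (no_types, lifting) Collect_cong)

lemma adj_cong: "(\<And>y. y \<in> F \<Longrightarrow> ends y = ends2 y) \<Longrightarrow> adj ends F = adj ends2 F"
  unfolding adj_def by (intro ext) auto

lemma num_cycles_cong: "(\<And>y. y \<in> F \<Longrightarrow> ends y = ends2 y) \<Longrightarrow> num_cycles V ends F = num_cycles V ends2 F"
  unfolding num_cycles_def using deg_cong[of F ends ends2] adj_cong[of F ends ends2] by simp

lemma num_isolated_cong: "(\<And>y. y \<in> F \<Longrightarrow> ends y = ends2 y) \<Longrightarrow> num_isolated V ends F = num_isolated V ends2 F"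
  unfolding num_isolated_def using deg_cong[of F ends ends2] by simp

lemma exc_cong: "(\<And>y. y \<in> F \<Longrightarrow> ends y = ends2 y) \<Longrightarrow> exc V ends F = exc V ends2 F"
  unfolding exc_def using num_isolated_cong num_cycles_cong by metis

lemma rtranclp_into_isolated:
  assumes "R\<^sup>*\<^sup>* x u" "\<And>z. \<not> R z u" shows "x = u"
  using assms(1) by (cases rule: rtranclp.cases) (use assms(2) in auto)

lemma exc_isolated:
  assumes "finite V" "u \<in> V" "\<And>y. y \<in> F \<Longrightarrow> u \<notin> ends y"
  shows "exc V ends F = exc (V - {u}) ends F + 1"
proof -
  have h: "{e \<in> F. u \<in> ends e} = {}" "{e \<in> F. ends e = {u}} = {}" using assms(3) by auto
  have d0: "deg ends F u = 0" unfolding deg_def h by simp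
  have nadj: "\<not> adj ends F z u" for z using assms(3) unfolding adj_def by auto
  have "{x\<in>V. deg ends F x = 0} = insert u {x\<in>V - {u}. deg ends F x = 0}" using d0 assms(2) by auto
  hence ni: "num_isolated V ends F = num_isolated (V - {u}) ends F + 1"
    unfolding num_isolated_def using assms(1) by simp
  have "{y\<in>V. (adj ends F)\<^sup>*\<^sup>* x y} = {y\<in>V - {u}. (adj ends F)\<^sup>*\<^sup>* x y}" if "x \<noteq> u" for x
    using rtranclp_into_isolated[of "adj ends F" x u, OF _ nadj] that by auto
  hence "{{y\<in>V. (adj ends F)\<^sup>*\<^sup>* x y} | x. x \<in> V \<and> deg ends F x \<noteq> 0}
       = {{y\<in>V - {u}. (adj ends F)\<^sup>*\<^sup>* x y} | x. x \<in> V - {u} \<and> deg ends F x \<noteq> 0}"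
    using d0 by (smt (verit, best) Collect_cong DiffD1 DiffI singletonD)
  hence "num_cycles V ends F = num_cycles (V - {u}) ends F" unfolding num_cycles_def by simp
  thus ?thesis using ni unfolding exc_def by simp
qed

lemma two_nbrs:
  assumes "two_connected V E ends" "x \<in> V" "\<And>e. e \<in> E \<Longrightarrow> ends e \<subseteq> V"
  shows "\<exists>a b. a \<noteq> b \<and> adj ends E x a \<and> adj ends E x b"
proof -
  from assms(1) have c3: "3 \<le> card V" and con: "connected_graph V E ends"
    and con2: "\<forall>z\<in>V. connected_graph (V - {z}) {e\<in>E. z \<notin> ends e} ends"
    unfolding two_connected_def by auto
  have fin: "finite V" using c3 card.infinite by fastforce
  have "card (V - {x}) \<ge> 2" using c3 assms(2) fin by simp
  then obtain y where y: "y \<in> V" "y \<noteq> x"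
    by (metis Diff_eq_empty_iff card_0_eq card_mono ex_in_conv fin finite_Diff insert_Diff insert_Diff_single not_numeral_le_zero subsetI subset_refl Diff_iff singletonI)
  have "(adj ends E)\<^sup>*\<^sup>* x y" using con y assms(2) unfolding connected_graph_def by auto
  then obtain a where a: "adj ends E x a" using y(2)
    by (metis converse_rtranclpE)
  have aV: "a \<noteq> x" using a unfolding adj_def by auto
  have ca: "card {x,a} \<le> 2" by (cases "x = a") auto
  have "card V - card {x,a} \<le> card (V - {x,a})" by (rule diff_card_le_card_Diff) simp
  hence "card (V - {x, a}) \<ge> 1" using c3 ca by linarith
  hence "V - {x, a} \<noteq> {}" by (metis card.empty not_one_le_zero)
  then obtain z where z: "z \<in> V" "z \<noteq> x" "z \<noteq> a" by blast
  have True: "a \<in> V" using a assms(3) unfolding adj_def by auto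
  have "(adj ends {e\<in>E. a \<notin> ends e})\<^sup>*\<^sup>* x z"
    using con2 True z assms(2) aV unfolding connected_graph_def by auto
  then obtain b where b: "adj ends {e\<in>E. a \<notin> ends e} x b" using z(2)
    by (metis converse_rtranclpE)
  hence "adj ends E x b" "b \<noteq> a" unfolding adj_def by auto
  thus ?thesis using a by blast
qed


locale L =
  fixes V :: "'v set" and E :: "'e set" and ends :: "'e \<Rightarrow> 'v set"
    and e f e1 e2 :: 'e and u a b :: 'v
  assumes finV: "finite V" and finE: "finite E"
  and card2: "\<And>x. x\<in>E \<Longrightarrow> card (ends x) = 2"
  and sub: "\<And>x. x\<in>E \<Longrightarrow> ends x \<subseteq> V"
  and eE: "e \<in> E" and ue: "u \<in> ends e" and fE: "f \<notin> E"
  and e1E: "e1 \<in> E" and e2E: "e2 \<in> E" and e1e: "e1 \<noteq> e" and e2e: "e2 \<noteq> e" and e12: "e1 \<noteq> e2"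
  and ends1: "ends e1 = {u,a}" and ends2: "ends e2 = {u,b}"
  and ab: "a \<noteq> b" and au: "a \<noteq> u" and bu: "b \<noteq> u"
  and uedges: "{x\<in>E. u \<in> ends x} = {e,e1,e2}" and uV: "u \<in> V"
begin

definition "E' = {x\<in>E. u \<notin> ends x} \<union> {f}"
definition "ends' = ends(f := {a,b})"
definition "g F = (F - {f}) \<union> {e1,e2}"
definition "piu x = (if x = u then a else x)"

lemma aV: "a \<in> V" using sub[OF e1E] ends1 by auto
lemma bV: "b \<in> V" using sub[OF e2E] ends2 by auto

lemma finE': "finite E'" unfolding E'_def using finE by auto

lemma card2': "y \<in> E' \<Longrightarrow> card (ends' y) = 2"
  unfolding E'_def ends'_def using card2 ab fE by auto

lemma gsub: "F \<subseteq> E' \<Longrightarrow> g F \<subseteq> E"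
  unfolding g_def E'_def using e1E e2E by auto

lemma e12notin: "F \<subseteq> E' \<Longrightarrow> e1 \<notin> F - {f} \<and> e2 \<notin> F - {f}"
  unfolding E'_def using ends1 ends2 by auto

lemma degA2:
  assumes "F \<subseteq> E'" "f \<in> F" "x \<noteq> u"
  shows "deg ends (g F) x = deg ends' F x"
proof -
  have fin: "finite F" using assms(1) finE' finite_subset by blast
  have d1: "deg ends (g F) x = card {y\<in>g F. x \<in> ends y}"
    using deg_noloop[of "g F" ends x] card2 gsub[OF assms(1)] by blast
  have d2: "deg ends' F x = card {y\<in>F. x \<in> ends' y}"
    using deg_noloop[of F ends' x] card2' assms(1) by blast
  have s1: "{y\<in>g F. x \<in> ends y} = {y\<in>F - {f}. x \<in> ends y} \<union> {y\<in>{e1,e2}. x \<in> ends y}"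
    unfolding g_def by auto
  have s2: "{y\<in>F. x \<in> ends' y} = {y\<in>F - {f}. x \<in> ends y} \<union> {y\<in>{f}. x \<in> {a,b}}"
    unfolding ends'_def using assms(2) by auto
  have c1: "card {y\<in>g F. x \<in> ends y} = card {y\<in>F - {f}. x \<in> ends y} + card {y\<in>{e1,e2}. x \<in> ends y}"
    unfolding s1 by (rule card_Un_disjoint) (use fin e12notin[OF assms(1)] in auto)
  have c2: "card {y\<in>F. x \<in> ends' y} = card {y\<in>F - {f}. x \<in> ends y} + card {y\<in>{f}. x \<in> {a,b}}"
    unfolding s2 by (rule card_Un_disjoint) (use fin in auto)
  have c3: "card {y\<in>{e1,e2}. x \<in> ends y} = card {y\<in>{f}. x \<in> {a,b}}"
  proof -
    consider "x = a" | "x = b" | "x \<noteq> a" "x \<noteq> b" by blast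
    thus ?thesis
    proof cases
      case 1
      hence "{y\<in>{e1,e2}. x \<in> ends y} = {e1}" "{y\<in>{f}. x \<in> {a,b}} = {f}"
        using ends1 ends2 ab au bu assms(3) by auto
      thus ?thesis by simp
    next
      case 2
      hence "{y\<in>{e1,e2}. x \<in> ends y} = {e2}" "{y\<in>{f}. x \<in> {a,b}} = {f}"
        using ends1 ends2 ab au bu assms(3) by auto
      thus ?thesis by simp
    next
      case 3
      hence "{y\<in>{e1,e2}. x \<in> ends y} = {}" "{y\<in>{f}. x \<in> {a,b}} = {}"
        using ends1 ends2 assms(3) by auto
      thus ?thesis by simp
    qed
  qed
  show ?thesis using d1 d2 c1 c2 c3 by simp
qed

lemma degu:
  assumes "F \<subseteq> E'"
  shows "deg ends (g F) u = 2"
proof -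
  have "deg ends (g F) u = card {y\<in>g F. u \<in> ends y}"
    using deg_noloop[of "g F" ends u] card2 gsub[OF assms(1)] by blast
  moreover have "{y\<in>g F. u \<in> ends y} = {e1,e2}"
    unfolding g_def using assms ends1 ends2 unfolding E'_def by auto
  ultimately show ?thesis using e12 by simp
qed

lemma adjR:
  assumes "F \<subseteq> E'" "f \<in> F" "adj ends (g F) x y"
  shows "(adj ends' F)\<^sup>*\<^sup>* (piu x) (piu y)"
proof -
  from assms(3) obtain z where z: "z \<in> g F" "x \<in> ends z" "y \<in> ends z" "x \<noteq> y"
    unfolding adj_def by blast
  show ?thesis
  proof (cases "z \<in> F - {f}")
    case True
    hence "u \<notin> ends z" "ends' z = ends z" using assms(1) unfolding E'_def ends'_def by auto
    hence "adj ends' F x y" "piu x = x" "piu y = y" using z True unfolding adj_def piu_def by auto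
    thus ?thesis by auto
  next
    case False
    hence "z = e1 \<or> z = e2" using z(1) unfolding g_def by auto
    moreover have "adj ends' F a b" "adj ends' F b a"
      using assms(2) ab unfolding adj_def ends'_def by auto
    ultimately show ?thesis using z ends1 ends2 au bu unfolding piu_def by auto
  qed
qed

lemma adjS:
  assumes "F \<subseteq> E'" "f \<in> F" "adj ends' F x y"
  shows "(adj ends (g F))\<^sup>*\<^sup>* x y"
proof -
  from assms(3) obtain z where z: "z \<in> F" "x \<in> ends' z" "y \<in> ends' z" "x \<noteq> y"
    unfolding adj_def by blast
  show ?thesis
  proof (cases "z = f")
    case True
    have r: "adj ends (g F) a u" "adj ends (g F) u b" "adj ends (g F) b u" "adj ends (g F) u a"
      unfolding adj_def g_def using ends1 ends2 au bu by auto
    have "{x,y} = {a,b}" using z True ab unfolding ends'_def by auto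
    hence "(x = a \<and> y = b) \<or> (x = b \<and> y = a)" using z(4) by (auto simp: doubleton_eq_iff)
    thus ?thesis using r by (meson converse_rtranclp_into_rtranclp r_into_rtranclp)
  next
    case False
    hence "adj ends (g F) x y" using z unfolding adj_def g_def ends'_def by auto
    thus ?thesis by auto
  qed
qed

lemma adjR_star:
  assumes "F \<subseteq> E'" "f \<in> F" "(adj ends (g F))\<^sup>*\<^sup>* x y"
  shows "(adj ends' F)\<^sup>*\<^sup>* (piu x) (piu y)"
  using assms(3) by (induction rule: rtranclp_induct) (auto intro: rtranclp_trans adjR[OF assms(1,2)])

lemma adjS_star:
  assumes "F \<subseteq> E'" "f \<in> F" "(adj ends' F)\<^sup>*\<^sup>* x y"
  shows "(adj ends (g F))\<^sup>*\<^sup>* x y"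
  using assms(3) by (induction rule: rtranclp_induct) (auto intro: rtranclp_trans adjS[OF assms(1,2)])

end

context L begin

lemma Ru: "adj ends (g F) u a" "adj ends (g F) a u"
  unfolding adj_def g_def using ends1 au by auto

lemma piu_star: "(adj ends (g F))\<^sup>*\<^sup>* x (piu x)"
  unfolding piu_def using Ru by auto

lemma comp_eq:
  assumes "F \<subseteq> E'" "f \<in> F"
  shows "{y\<in>V. (adj ends (g F))\<^sup>*\<^sup>* x y} - {u} = {y\<in>V - {u}. (adj ends' F)\<^sup>*\<^sup>* (piu x) y}"
proof -
  have "(adj ends (g F))\<^sup>*\<^sup>* x y \<longleftrightarrow> (adj ends' F)\<^sup>*\<^sup>* (piu x) y" if "y \<noteq> u" for y
  proof
    assume "(adj ends (g F))\<^sup>*\<^sup>* x y"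
    from adjR_star[OF assms this] show "(adj ends' F)\<^sup>*\<^sup>* (piu x) y" using that unfolding piu_def by simp
  next
    assume "(adj ends' F)\<^sup>*\<^sup>* (piu x) y"
    from adjS_star[OF assms this] show "(adj ends (g F))\<^sup>*\<^sup>* x y" using piu_star rtranclp_trans by metis
  qed
  thus ?thesis by auto
qed

lemma exc_A2:
  assumes "F \<subseteq> E'" "f \<in> F"
  shows "exc V ends (g F) = exc (V - {u}) ends' F"
proof -
  let ?R = "adj ends (g F)" and ?S = "adj ends' F"
  let ?CG = "\<lambda>x. {y\<in>V. ?R\<^sup>*\<^sup>* x y}" and ?CU = "\<lambda>x. {y\<in>V - {u}. ?S\<^sup>*\<^sup>* x y}"
  have degeq: "x \<noteq> u \<Longrightarrow> deg ends (g F) x = deg ends' F x" for x using degA2[OF assms] by blast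
  have du: "deg ends (g F) u = 2" using degu[OF assms(1)] .
  have da: "deg ends' F a \<noteq> 0"
  proof -
    have f1: "f \<in> {y\<in>F. a \<in> ends' y}" using assms(2) unfolding ends'_def by auto
    have fF: "finite F" using assms(1) finE' finite_subset by blast
    have f2: "finite {y\<in>F. a \<in> ends' y}" using fF by simp
    have "0 < card {y\<in>F. a \<in> ends' y}" using f1 f2 card_gt_0_iff by blast
    hence "card {y\<in>F. a \<in> ends' y} \<noteq> 0" by linarith
    thus ?thesis unfolding deg_def by simp
  qed
  have iso: "{x\<in>V. deg ends (g F) x = 0} = {x\<in>V - {u}. deg ends' F x = 0}"
  proof -
    have "(x\<in>V \<and> deg ends (g F) x = 0) \<longleftrightarrow> (x \<in> V - {u} \<and> deg ends' F x = 0)" for x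
      by (cases "x = u") (simp_all add: du degeq)
    thus ?thesis by blast
  qed
  define SG where "SG = {?CG x | x. x \<in> V \<and> deg ends (g F) x \<noteq> 0}"
  define SU where "SU = {?CU x | x. x \<in> V - {u} \<and> deg ends' F x \<noteq> 0}"
  have img: "SU = (\<lambda>C. C - {u}) ` SG"
  proof
    show "SU \<subseteq> (\<lambda>C. C - {u}) ` SG"
    proof
      fix C assume "C \<in> SU"
      then obtain x where x: "C = ?CU x" "x \<in> V - {u}" "deg ends' F x \<noteq> 0" unfolding SU_def by blast
      have "piu x = x" using x unfolding piu_def by auto
      hence "C = ?CG x - {u}" using comp_eq[OF assms, of x] x by simp
      moreover have "?CG x \<in> SG" unfolding SG_def using x degeq[of x] by auto
      ultimately show "C \<in> (\<lambda>C. C - {u}) ` SG" by blast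
    qed
  next
    show "(\<lambda>C. C - {u}) ` SG \<subseteq> SU"
    proof
      fix C assume "C \<in> (\<lambda>C. C - {u}) ` SG"
      then obtain x where x: "C = ?CG x - {u}" "x \<in> V" "deg ends (g F) x \<noteq> 0" unfolding SG_def by blast
      have "C = ?CU (piu x)" using comp_eq[OF assms, of x] x by simp
      moreover have "piu x \<in> V - {u} \<and> deg ends' F (piu x) \<noteq> 0"
        using x aV au da degeq[of x] unfolding piu_def by auto
      ultimately show "C \<in> SU" unfolding SU_def by blast
    qed
  qed
  have inj: "inj_on (\<lambda>C. C - {u}) SG"
  proof (rule inj_onI)
    fix C1 C2 assume C1: "C1 \<in> SG" and C2: "C2 \<in> SG" and eq: "C1 - {u} = C2 - {u}"
    have key: "u \<in> D1 \<Longrightarrow> u \<in> D2" if H: "D1 \<in> SG" "D2 \<in> SG" "D1 - {u} = D2 - {u}" for D1 D2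
    proof -
      assume uD: "u \<in> D1"
      obtain x1 where x1: "D1 = ?CG x1" using H(1) unfolding SG_def by blast
      obtain x2 where x2: "D2 = ?CG x2" using H(2) unfolding SG_def by blast
      have "?R\<^sup>*\<^sup>* x1 u" using uD x1 by simp
      hence "?R\<^sup>*\<^sup>* x1 a" using Ru(1) by (rule rtranclp.rtrancl_into_rtrancl)
      hence "a \<in> D1 - {u}" using x1 aV au by simp
      hence "a \<in> D2" using H(3) by blast
      hence "?R\<^sup>*\<^sup>* x2 a" using x2 by simp
      hence "?R\<^sup>*\<^sup>* x2 u" using Ru(2) by (rule rtranclp.rtrancl_into_rtrancl)
      thus "u \<in> D2" using x2 uV by simp
    qed
    have "u \<in> C1 \<longleftrightarrow> u \<in> C2" using key[OF C1 C2 eq] key[OF C2 C1 eq[symmetric]] by blast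
    thus "C1 = C2" using eq by blast
  qed
  have n1: "num_cycles V ends (g F) = card SG" unfolding num_cycles_def SG_def by simp
  have n2: "num_cycles (V - {u}) ends' F = card SU" unfolding num_cycles_def SU_def by simp
  have "card SU = card SG" unfolding img by (rule card_image[OF inj])
  hence "num_cycles V ends (g F) = num_cycles (V - {u}) ends' F" using n1 n2 by simp
  moreover have "num_isolated V ends (g F) = num_isolated (V - {u}) ends' F"
    unfolding num_isolated_def using iso by simp
  ultimately show ?thesis unfolding exc_def by simp
qed

end

context L begin

lemma cover_u:
  assumes "even_cover V E ends F" "e \<notin> F"
  shows "(e1 \<in> F \<and> e2 \<in> F) \<or> (e1 \<notin> F \<and> e2 \<notin> F)"
proof -
  have FE: "F \<subseteq> E" using assms(1) unfolding even_cover_def by auto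
  have c0: "deg ends F u = card {y\<in>F. u \<in> ends y}" using deg_noloop[of F ends u] card2 FE by blast
  have s0: "{y\<in>F. u \<in> ends y} = {e1,e2} \<inter> F" using uedges FE assms(2) by auto
  have d: "deg ends F u = 0 \<or> deg ends F u = 2" using assms(1) uV unfolding even_cover_def by blast
  have c: "card ({e1,e2} \<inter> F) = deg ends F u" using c0 s0 by simp
  have "card ({e1,e2} \<inter> F) \<noteq> 1" unfolding c using d by linarith
  thus ?thesis using e12 by (cases "e1 \<in> F"; cases "e2 \<in> F") auto
qed

definition "A1 = {F. even_cover V E ends F \<and> e \<notin> F \<and> e1 \<notin> F}"
definition "A2 = {F. even_cover V E ends F \<and> e \<notin> F \<and> e1 \<in> F}"
definition "B1 = {F. even_cover (V - {u}) E' ends' F \<and> f \<notin> F}"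
definition "B2 = {F. even_cover (V - {u}) E' ends' F \<and> f \<in> F}"

lemma eE': "e \<notin> E'" unfolding E'_def using ue eE fE by auto

lemma A1B1: "A1 = B1"
proof
  show "A1 \<subseteq> B1"
  proof
    fix F assume "F \<in> A1"
    hence F: "even_cover V E ends F" "e \<notin> F" "e1 \<notin> F" unfolding A1_def by auto
    hence "e2 \<notin> F" using cover_u by blast
    hence FE': "F \<subseteq> {x\<in>E. u \<notin> ends x}" using F uedges unfolding even_cover_def by auto
    hence fF: "f \<notin> F" using fE by auto
    have "\<And>y. y \<in> F \<Longrightarrow> ends y = ends' y" using fF unfolding ends'_def by auto
    hence "deg ends F x = deg ends' F x" for x using deg_cong by metis
    thus "F \<in> B1" using F FE' fF unfolding B1_def even_cover_def E'_def by auto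
  qed
next
  show "B1 \<subseteq> A1"
  proof
    fix F assume "F \<in> B1"
    hence F: "even_cover (V - {u}) E' ends' F" "f \<notin> F" unfolding B1_def by auto
    hence FE': "F \<subseteq> {x\<in>E. u \<notin> ends x}" unfolding even_cover_def E'_def by auto
    have "\<And>y. y \<in> F \<Longrightarrow> ends y = ends' y" using F unfolding ends'_def by auto
    hence dd: "deg ends F x = deg ends' F x" for x using deg_cong by metis
    have h: "{y \<in> F. u \<in> ends y} = {}" "{y \<in> F. ends y = {u}} = {}" using FE' by auto
    have "deg ends F u = 0" unfolding deg_def h by simp
    hence "even_cover V E ends F" using F FE' dd unfolding even_cover_def by auto
    moreover have "e \<notin> F" "e1 \<notin> F" using FE' ue ends1 by auto
    ultimately show "F \<in> A1" unfolding A1_def by auto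
  qed
qed

lemma exc_A1: "F \<in> B1 \<Longrightarrow> exc V ends F = exc (V - {u}) ends' F + 1"
proof -
  assume "F \<in> B1"
  hence F: "F \<subseteq> E'" "f \<notin> F" unfolding B1_def even_cover_def by auto
  hence nu: "\<And>y. y \<in> F \<Longrightarrow> u \<notin> ends y" unfolding E'_def by auto
  have 1: "exc V ends F = exc (V - {u}) ends F + 1" by (rule exc_isolated[OF finV uV nu])
  have "\<And>y. y \<in> F \<Longrightarrow> ends y = ends' y" using F unfolding ends'_def by auto
  hence "exc (V - {u}) ends F = exc (V - {u}) ends' F" by (rule exc_cong)
  thus ?thesis using 1 by simp
qed

lemma A2B2: "A2 = g ` B2"
proof
  show "g ` B2 \<subseteq> A2"
  proof
    fix F' assume "F' \<in> g ` B2"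
    then obtain F where F: "F' = g F" "even_cover (V - {u}) E' ends' F" "f \<in> F" unfolding B2_def by auto
    have FE': "F \<subseteq> E'" using F unfolding even_cover_def by auto
    have "deg ends F' x = 0 \<or> deg ends F' x = 2" if "x \<in> V" for x
    proof (cases "x = u")
      case True thus ?thesis using degu[OF FE'] F by simp
    next
      case False thus ?thesis using degA2[OF FE' F(3) False] F that unfolding even_cover_def by auto
    qed
    moreover have "F' \<subseteq> E" using gsub[OF FE'] F by simp
    moreover have "e \<notin> F'" using F FE' eE' e1e e2e unfolding g_def by auto
    moreover have "e1 \<in> F'" using F unfolding g_def by auto
    ultimately show "F' \<in> A2" unfolding A2_def even_cover_def by auto
  qed
next
  show "A2 \<subseteq> g ` B2"
  proof
    fix F' assume "F' \<in> A2"
    hence F': "even_cover V E ends F'" "e \<notin> F'" "e1 \<in> F'" unfolding A2_def by auto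
    hence e2F: "e2 \<in> F'" using cover_u by blast
    have F'E: "F' \<subseteq> E" using F' unfolding even_cover_def by auto
    define F where "F = (F' - {e1,e2}) \<union> {f}"
    have FE': "F \<subseteq> E'" unfolding F_def E'_def using F'E uedges F'(2) by auto
    have fF: "f \<in> F" unfolding F_def by auto
    have gF: "g F = F'" unfolding g_def F_def using F'(3) e2F F'E fE by auto
    have "deg ends' F x = 0 \<or> deg ends' F x = 2" if "x \<in> V - {u}" for x
      using degA2[OF FE' fF, of x] that gF F'(1) unfolding even_cover_def by auto
    hence "F \<in> B2" using FE' fF unfolding B2_def even_cover_def by auto
    thus "F' \<in> g ` B2" using gF by auto
  qed
qed

lemma exc_out_main:
  "exc_out V E ends e =
     min (INF F\<in>B2. ereal (real (exc (V - {u}) ends' F))) ((INF F\<in>B1. ereal (real (exc (V - {u}) ends' F))) + 1)"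
proof -
  let ?X = "\<lambda>F. ereal (real (exc V ends F))" and ?Y = "\<lambda>F. ereal (real (exc (V - {u}) ends' F))"
  have "{F. even_cover V E ends F \<and> e \<notin> F} = A1 \<union> A2" unfolding A1_def A2_def by auto
  hence "exc_out V E ends e = inf (INF F\<in>A1. ?X F) (INF F\<in>A2. ?X F)"
    unfolding exc_out_def by (simp add: INF_union)
  also have "(INF F\<in>A2. ?X F) = (INF F\<in>B2. ?Y F)"
  proof -
    have "(INF F\<in>A2. ?X F) = (INF F\<in>B2. ?X (g F))" unfolding A2B2 by (simp add: image_comp)
    also have "\<dots> = (INF F\<in>B2. ?Y F)"
      by (rule INF_cong) (auto simp: B2_def even_cover_def exc_A2)
    finally show ?thesis .
  qed
  also have "(INF F\<in>A1. ?X F) = (INF F\<in>B1. ?Y F) + 1"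
  proof -
    have "(INF F\<in>A1. ?X F) = (INF F\<in>B1. ?Y F + 1)"
      unfolding A1B1 by (rule INF_cong) (auto simp: exc_A1)
    also have "\<dots> = (INF F\<in>B1. ?Y F) + 1"
    proof (cases "B1 = {}")
      case True thus ?thesis by (simp add: top_ereal_def)
    next
      case False thus ?thesis by (rule INF_ereal_add_left) auto
    qed
    finally show ?thesis .
  qed
  finally show ?thesis by (simp add: inf_min min.commute)
qed

end


lemma ereal_arith:
  fixes x y :: ereal and c :: real
  assumes "x \<noteq> -\<infinity>" "y \<noteq> -\<infinity>"
  shows "min x (y + 1) - ereal c = min ((x - 2) - ereal c + 2) (y - ereal c + 1)"
  using assms by (cases x; cases y) (auto simp: min_def)

lemma card2_eq: "card S = 2 \<Longrightarrow> u \<in> S \<Longrightarrow> a \<in> S \<Longrightarrow> u \<noteq> a \<Longrightarrow> S = {u, a}"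
  by (metis card_2_iff doubleton_eq_iff insertE singletonD)

context L begin

lemma n2_main:
  assumes "ends e = {u,v}" "u \<noteq> v" "deg ends E v = 3"
  shows "real (card V) + real (n2 V E ends) = real (card (V-{u})) + real (n2 (V-{u}) E' ends')"
proof -
  have degE: "deg ends E x = card {y\<in>E. x \<in> ends y}" for x by (rule deg_noloop) (rule card2)
  have degE': "deg ends (E - {e}) x = card {y\<in>E - {e}. x \<in> ends y}" for x by (rule deg_noloop) (simp add: card2)
  have du: "deg ends E u = 3" using degE[of u] uedges e1e e2e e12 by simp
  have gE: "g E' = E - {e}" unfolding g_def E'_def using uedges e1E e2E e1e e2e fE by auto
  have fE': "f \<in> E'" unfolding E'_def by auto
  have d1: "deg ends' E' x = deg ends (E - {e}) x" if "x \<noteq> u" for x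
    using degA2[OF _ fE' that] gE by simp
  have d2: "deg ends E x = deg ends (E - {e}) x + (if x = v then 1 else 0)" if "x \<noteq> u" for x
  proof -
    have "{y\<in>E. x \<in> ends y} = {y\<in>E - {e}. x \<in> ends y} \<union> (if x = v then {e} else {})"
      using assms(1) eE that by auto
    moreover have "finite {y\<in>E - {e}. x \<in> ends y}" using finE by auto
    ultimately show ?thesis unfolding degE degE' by (auto simp: card_insert_if)
  qed
  have vV: "v \<in> V" using sub[OF eE] assms(1) by auto
  have pt: "(x \<in> V - {u} \<and> deg ends' E' x = 2) \<longleftrightarrow> (x = v \<or> (x \<in> V \<and> deg ends E x = 2))" for x
  proof (cases "x = u")
    case True thus ?thesis using du assms(2) by simp
  next
    case False
    have a1: "deg ends' E' x = deg ends (E - {e}) x" using d1[OF False] .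
    have a2: "deg ends E x = deg ends (E - {e}) x + (if x = v then 1 else 0)" using d2[OF False] .
    show ?thesis
    proof (cases "x = v")
      case True thus ?thesis using a1 a2 assms(3) vV False by simp
    next
      case xv: False thus ?thesis using a1 a2 False by simp
    qed
  qed
  have "{x\<in>V - {u}. deg ends' E' x = 2} = insert v {x\<in>V. deg ends E x = 2}"
    using pt by blast
  moreover have "v \<notin> {x\<in>V. deg ends E x = 2}" using assms(3) by simp
  ultimately have "n2 (V-{u}) E' ends' = n2 V E ends + 1" unfolding n2_def using finV by simp
  moreover have "card V = card (V - {u}) + 1"
  proof -
    have "card (V - {u}) = card V - 1" using finV uV by (simp add: card_Diff_singleton)
    moreover have "card V > 0" using finV uV card_gt_0_iff by blast
    ultimately show ?thesis by linarith
  qed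
  ultimately show ?thesis by simp
qed

end

lemma deg_ge2:
  assumes "two_connected V E ends" "x \<in> V" "\<And>e. e \<in> E \<Longrightarrow> ends e \<subseteq> V" "\<And>e. e \<in> E \<Longrightarrow> card (ends e) = 2"
  shows "\<exists>e1 e2 a b. e1 \<in> E \<and> e2 \<in> E \<and> a \<noteq> b \<and> ends e1 = {x,a} \<and> ends e2 = {x,b} \<and> a \<noteq> x \<and> b \<noteq> x"
proof -
  obtain a b where ab: "a \<noteq> b" "adj ends E x a" "adj ends E x b" using two_nbrs[OF assms(1-3)] by blast
  then obtain e1 e2 where "e1 \<in> E" "x \<in> ends e1" "a \<in> ends e1" "x \<noteq> a" "e2 \<in> E" "x \<in> ends e2" "b \<in> ends e2" "x \<noteq> b"
    unfolding adj_def by blast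
  thus ?thesis using ab card2_eq assms(4) by metis
qed



theorem mainTheorem10:
  fixes V :: "'v set" and E :: "'e set" and ends :: "'e \<Rightarrow> 'v set"
    and e f :: 'e and u v :: 'v
  assumes "wf_graph V E ends"
    and "two_connected V E ends"
    and "subcubic V E ends"
    and "e \<in> E" and "ends e = {u, v}" and "u \<noteq> v"
    and "simple_graph V (E - {e}) ends"
    and "two_connected V (E - {e}) ends"
    and "f \<notin> E"
  shows "delta_hat V E ends e =
           min (delta (Gu_V V u) (Gu_E E ends u f) (Gu_ends E ends e u f) f + 2)
               (delta_hat (Gu_V V u) (Gu_E E ends u f) (Gu_ends E ends e u f) f + 1)"
proof -
  note wf = assms(1)[unfolded wf_graph_def]
  have finV: "finite V" and finE: "finite E" using wf by auto
  have sub: "\<And>x. x \<in> E \<Longrightarrow> ends x \<subseteq> V" using wf by auto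
  have card2: "\<And>x. x \<in> E \<Longrightarrow> card (ends x) = 2"
    using assms(5,6,7) unfolding simple_graph_def by (metis Diff_iff card_2_iff singletonD)
  have sub': "\<And>x. x \<in> E - {e} \<Longrightarrow> ends x \<subseteq> V" using sub by auto
  have card2m: "\<And>x. x \<in> E - {e} \<Longrightarrow> card (ends x) = 2" using card2 by auto
  have uV: "u \<in> V" and vV: "v \<in> V" using sub[OF assms(4)] assms(5) by auto
  obtain e1 e2 a b where E1: "e1 \<in> E - {e}" "e2 \<in> E - {e}" "a \<noteq> b" "ends e1 = {u,a}" "ends e2 = {u,b}" "a \<noteq> u" "b \<noteq> u"
    using deg_ge2[OF assms(8) uV sub' card2m] by blast
  have e12: "e1 \<noteq> e2" using E1 by (metis doubleton_eq_iff)
  have degE: "deg ends E x = card {y\<in>E. x \<in> ends y}" for x by (rule deg_noloop) (rule card2)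
  have le3: "card {y\<in>E. x \<in> ends y} \<le> 3" if "x \<in> V" for x
    using assms(3) that degE unfolding subcubic_def by metis
  have uedges: "{x\<in>E. u \<in> ends x} = {e,e1,e2}"
  proof -
    have s: "{e,e1,e2} \<subseteq> {x\<in>E. u \<in> ends x}" using E1 assms(4,5) by auto
    have c3: "card {e,e1,e2} = 3" using E1 e12 by auto
    have fin: "finite {x\<in>E. u \<in> ends x}" using finE by simp
    have "card {x\<in>E. u \<in> ends x} \<le> 3" by (rule le3[OF uV])
    moreover have "card {e,e1,e2} \<le> card {x\<in>E. u \<in> ends x}" by (rule card_mono[OF fin s])
    ultimately have "card {e,e1,e2} = card {x\<in>E. u \<in> ends x}" using c3 by linarith
    hence "{e,e1,e2} = {x\<in>E. u \<in> ends x}" by (rule card_subset_eq[OF fin s])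
    thus ?thesis by (rule sym)
  qed
  interpret L V E ends e f e1 e2 u a b
    by unfold_locales (use finV finE card2 sub assms(4,5,9) E1 e12 uedges uV in auto)
  have degv: "deg ends E v = 3"
  proof -
    obtain c1 c2 p q where C: "c1 \<in> E - {e}" "c2 \<in> E - {e}" "p \<noteq> q" "ends c1 = {v,p}" "ends c2 = {v,q}"
      using deg_ge2[OF assms(8) vV sub' card2m] by blast
    have "c1 \<noteq> c2" using C by (metis doubleton_eq_iff)
    hence "card {e,c1,c2} = 3" using C by auto
    moreover have "{e,c1,c2} \<subseteq> {y\<in>E. v \<in> ends y}" using C assms(4,5) by auto
    moreover have "finite {y\<in>E. v \<in> ends y}" using finE by simp
    ultimately have "card {y\<in>E. v \<in> ends y} \<ge> 3" using card_mono by metis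
    thus ?thesis using le3[OF vV] degE by simp
  qed
  have nb: "nbrs_minus E ends e u = {a,b}"
  proof -
    have "w \<in> nbrs_minus E ends e u \<longleftrightarrow> w = a \<or> w = b" for w
    proof
      assume "w \<in> nbrs_minus E ends e u"
      then obtain y where "y \<in> E - {e}" "u \<in> ends y" "w \<in> ends y" "w \<noteq> u" unfolding nbrs_minus_def by blast
      hence "y = e1 \<or> y = e2" using uedges by auto
      thus "w = a \<or> w = b" using E1 \<open>w \<in> ends y\<close> \<open>w \<noteq> u\<close> by auto
    next
      assume "w = a \<or> w = b"
      thus "w \<in> nbrs_minus E ends e u" unfolding nbrs_minus_def using E1 by auto
    qed
    thus ?thesis by auto
  qed
  have G1: "Gu_V V u = V - {u}" unfolding Gu_V_def by simp
  have G2: "Gu_E E ends u f = E'" unfolding Gu_E_def E'_def by simp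
  have G3: "Gu_ends E ends e u f = ends'" unfolding Gu_ends_def ends'_def nb by simp
  let ?I2 = "INF F\<in>B2. ereal (real (exc (V - {u}) ends' F))"
  let ?I1 = "INF F\<in>B1. ereal (real (exc (V - {u}) ends' F))"
  have i2: "exc_in (V - {u}) E' ends' f = ?I2 - 2" unfolding exc_in_def B2_def by simp
  have i1: "exc_out (V - {u}) E' ends' f = ?I1" unfolding exc_out_def B1_def by simp
  have nn2: "?I2 \<noteq> -\<infinity>" unfolding INF_eq_minf by (intro exI[of _ 0]) auto
  have nn1: "?I1 \<noteq> -\<infinity>" unfolding INF_eq_minf by (intro exI[of _ 0]) auto
  have c: "(real (card V) + real (n2 V E ends)) / 4 = (real (card (V-{u})) + real (n2 (V-{u}) E' ends')) / 4"
    using n2_main[OF assms(5,6) degv] by simp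
  show ?thesis
    unfolding G1 G2 G3 delta_hat_def delta_def i1 i2 exc_out_main c
    by (rule ereal_arith[OF nn2 nn1])
qed


end
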